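(* Let $d\ge 2$, let $q:\mathbb{R}\to\mathbb{R}$ be a Schwartz function supported in $[\tfrac12,2]$, let $b\in[0,1)$, and let $f\in L^1(\mathbb{R}^d)$ with $F = f*\tilde f$. For $N>0$ define $H_1:\mathbb{R}\to\mathbb{C}$ by $$H_1(t) = \frac{1}{\sqrt{t+b}}\, h_1(\sqrt{t+b})\, q\!\left(\frac{\sqrt{t+b}}{N}\right)$$ for $t > -b$, and $H_1(t)=0$ otherwise. Then for all sufficiently large $N$, $$\sum_{\nu\in\mathbb{Z},\,\nu\neq 0} |\hat H_1(\nu)| \le \frac{C\,\|F\|_1}{N},$$ where $C$ depends only on $q$ and $d$.
   Context: The Fourier transform is $\hat u(\xi)=\int u(x)e^{-2\pi i x\cdot\xi}dx$, in any dimension. We write $\tilde f(x)=\overline{f(-x)}$. For $t>0$, $\sigma_t$ denotes surface measure on the sphere $\{\xi\in\mathbb{R}^d:|\xi|=t\}$, and $$\widehat{d\sigma_t}(x)=\int_{|\xi|=t} e^{-2\pi i x\cdot\xi}\,d\sigma_t(\xi).$$ For $t>0$ we set $$h_1(t)=\int_{|x|\le 1} F(x)\,\widehat{d\sigma_t}(x)\,dx.$$ *)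

theory Defs
  imports "HOL-Analysis.Analysis"
begin

definition schwartz :: "(real \<Rightarrow> real) \<Rightarrow> bool" where
  "schwartz q \<longleftrightarrow>
     (\<forall>k t. ((deriv ^^ k) q) differentiable (at t)) \<and>
     (\<forall>k m. bounded (range (\<lambda>t. t ^ m * (deriv ^^ k) q t)))"

definition tilde :: "('a::euclidean_space \<Rightarrow> complex) \<Rightarrow> 'a \<Rightarrow> complex" where
  "tilde f x = cnj (f (- x))"

definition conv :: "('a::euclidean_space \<Rightarrow> complex) \<Rightarrow> ('a \<Rightarrow> complex) \<Rightarrow> 'a \<Rightarrow> complex" where
  "conv f g x = (\<integral>y. f y * g (x - y) \<partial>lborel)"

definition L1norm :: "('a::euclidean_space \<Rightarrow> complex) \<Rightarrow> real" where
  "L1norm F = (\<integral>x. norm (F x) \<partial>lborel)"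

text \<open>Surface measure on the sphere of radius t in R^d, via the cone construction:
  sigma_t(E) = d * t^(d-1) * Lebesgue{eta : 0 < |eta| \<le> 1, t * eta/|eta| \<in> E}.\<close>
definition sphere_measure :: "real \<Rightarrow> 'a::euclidean_space measure" where
  "sphere_measure t =
     density (distr (density lborel (indicator (cball (0::'a) 1 - {0}))) borel
                    (\<lambda>\<eta>. t *\<^sub>R sgn \<eta>))
             (\<lambda>_. ennreal (real DIM('a) * t ^ (DIM('a) - 1)))"

definition sphere_ft :: "real \<Rightarrow> 'a::euclidean_space \<Rightarrow> complex" where
  "sphere_ft t x = (\<integral>\<xi>. cis (- 2 * pi * (x \<bullet> \<xi>)) \<partial>(sphere_measure t))"

definition h1 :: "('a::euclidean_space \<Rightarrow> complex) \<Rightarrow> real \<Rightarrow> complex" where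
  "h1 F t = (\<integral>x. indicator (cball (0::'a) 1) x *\<^sub>R (F x * sphere_ft t x) \<partial>lborel)"

definition H1 :: "(real \<Rightarrow> real) \<Rightarrow> real \<Rightarrow> ('a::euclidean_space \<Rightarrow> complex) \<Rightarrow> real \<Rightarrow> real \<Rightarrow> complex" where
  "H1 q b F N t = (if t > - b then
      complex_of_real (1 / sqrt (t + b)) * h1 F (sqrt (t + b)) * complex_of_real (q (sqrt (t + b) / N))
    else 0)"

definition ft1 :: "(real \<Rightarrow> complex) \<Rightarrow> real \<Rightarrow> complex" where
  "ft1 H \<nu> = (\<integral>t. H t * cis (- 2 * pi * t * \<nu>) \<partial>lborel)"

end

theory Submission
  imports Defs
begin


lemma dq_deriv:
  assumes "schwartz q"
  shows "((deriv^^i) q has_real_derivative (deriv^^Suc i) q t) (at t)"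
proof -
  have "(deriv^^i) q differentiable (at t)" using assms unfolding schwartz_def by blast
  then show ?thesis using DERIV_deriv_iff_real_differentiable by fastforce
qed

lemma dq_cont:
  assumes "schwartz q"
  shows "isCont ((deriv^^i) q) t"
  using dq_deriv[OF assms] DERIV_isCont by blast

lemma dq_bound:
  assumes "schwartz q"
  shows "\<exists>B. \<forall>t. \<bar>(deriv^^i) q t\<bar> \<le> B"
proof -
  have "bounded (range (\<lambda>t. t ^ 0 * (deriv ^^ i) q t))" using assms unfolding schwartz_def by blast
  then obtain B where "\<forall>y\<in>range (\<lambda>t. t ^ 0 * (deriv ^^ i) q t). norm y \<le> B"
    unfolding bounded_iff by blast
  then show ?thesis by auto
qed

lemma dq_zero:
  assumes "\<forall>t. t \<notin> {1/2..2} \<longrightarrow> q t = 0" "t \<notin> {1/2..2::real}"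
  shows "(deriv^^i) q t = 0"
  using assms(2)
proof (induction i arbitrary: t)
  case 0
  then show ?case using assms(1) by simp
next
  case (Suc i)
  have op: "open (- {1/2..2::real})" by auto
  have "eventually (\<lambda>s. s \<in> - {1/2..2::real}) (nhds t)"
    using Suc.prems op by (intro eventually_nhds_in_open) auto
  then have ev: "eventually (\<lambda>s. (deriv^^i) q s = (\<lambda>_. 0) s) (nhds t)"
    by eventually_elim (use Suc.IH in auto)
  have "deriv ((deriv^^i) q) t = deriv (\<lambda>_. 0::real) t"
    by (rule deriv_cong_ev[OF ev refl])
  then show ?case by simp
qed



type_synonym trm = "real \<times> nat \<times> nat \<times> nat"

definition tm :: "(real \<Rightarrow> real) \<Rightarrow> trm \<Rightarrow> real \<Rightarrow> real \<Rightarrow> real" where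
  "tm q t c w = (case t of (a,i,j,m) \<Rightarrow> a * inverse w ^ j * (w - c) ^ m * (deriv^^i) q (w - c))"

definition ev :: "(real \<Rightarrow> real) \<Rightarrow> trm list \<Rightarrow> real \<Rightarrow> real \<Rightarrow> real" where
  "ev q L c w = sum_list (map (\<lambda>t. tm q t c w) L)"

definition stp1 :: "trm \<Rightarrow> trm list" where
  "stp1 t = (case t of (a,i,j,m) \<Rightarrow>
     [(- real (j+1) * a, i, j+2, m), (real m * a, i, j+1, m-1), (a, Suc i, j+1, m)])"

definition stp :: "trm list \<Rightarrow> trm list" where
  "stp L = concat (map stp1 L)"

lemma tm_deriv:
  assumes "schwartz q" "w \<noteq> 0"
  shows "((\<lambda>w. tm q t c w / w) has_real_derivative ev q (stp1 t) c w) (at w)"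
proof -
  obtain a i j m where t: "t = (a,i,j,m)" by (cases t) auto
  have e: "(\<lambda>w. tm q t c w / w) = (\<lambda>w. a * inverse w ^ Suc j * (w - c) ^ m * (deriv^^i) q (w - c))"
    by (auto simp: tm_def t field_simps)
  have d1: "((\<lambda>w. inverse w ^ Suc j) has_real_derivative (- real (Suc j) * inverse w ^ (j+2))) (at w)"
  proof -
    have "((\<lambda>w. inverse (w ^ Suc j)) has_real_derivative (- ((real (Suc j) * w ^ j) * inverse ((w ^ Suc j)^ Suc (Suc 0))))) (at w)"
      using assms(2) DERIV_inverse_fun[OF DERIV_pow[of "Suc j" w UNIV]] by simp
    moreover have "- ((real (Suc j) * w ^ j) * inverse ((w ^ Suc j)^ Suc (Suc 0))) = - real (Suc j) * inverse w ^ (j+2)"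
      using assms(2) by (simp add: field_simps power2_eq_square power_Suc)
    ultimately show ?thesis by (simp add: power_inverse)
  qed
  have d2: "((\<lambda>w. (w - c) ^ m) has_real_derivative (real m * (w - c) ^ (m - 1))) (at w)"
    by (auto intro!: derivative_eq_intros)
  have d3: "((\<lambda>w. (deriv^^i) q (w - c)) has_real_derivative (deriv^^Suc i) q (w - c)) (at w)"
  proof -
    have "((\<lambda>w. w - c) has_real_derivative 1) (at w)" by (auto intro!: derivative_eq_intros)
    from DERIV_chain2[OF dq_deriv[OF assms(1)] this] show ?thesis by simp
  qed
  have "((\<lambda>w. a * inverse w ^ Suc j * (w - c) ^ m * (deriv^^i) q (w - c)) has_real_derivative
     a * (- real (Suc j) * inverse w ^ (j+2)) * (w - c) ^ m * (deriv^^i) q (w - c)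
     + a * inverse w ^ Suc j * (real m * (w - c) ^ (m - 1)) * (deriv^^i) q (w - c)
     + a * inverse w ^ Suc j * (w - c) ^ m * (deriv^^Suc i) q (w - c)) (at w)"
    by (rule derivative_eq_intros d1 d2 d3 refl | simp add: algebra_simps)+
  then show ?thesis unfolding e
    by (simp add: ev_def stp1_def t tm_def algebra_simps)
qed



lemma ev_Nil[simp]: "ev q [] c w = 0" by (simp add: ev_def)
lemma ev_Cons[simp]: "ev q (t # L) c w = tm q t c w + ev q L c w" by (simp add: ev_def)
lemma ev_append[simp]: "ev q (L1 @ L2) c w = ev q L1 c w + ev q L2 c w" by (simp add: ev_def)
lemma stp_Nil[simp]: "stp [] = []" by (simp add: stp_def)
lemma stp_Cons[simp]: "stp (t # L) = stp1 t @ stp L" by (simp add: stp_def)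

lemma ev_deriv:
  assumes "schwartz q" "w \<noteq> 0"
  shows "((\<lambda>w. ev q L c w / w) has_real_derivative ev q (stp L) c w) (at w)"
proof (induction L)
  case Nil
  then show ?case by simp
next
  case (Cons t L)
  have "((\<lambda>w. tm q t c w / w + ev q L c w / w) has_real_derivative ev q (stp1 t) c w + ev q (stp L) c w) (at w)"
    by (intro DERIV_add tm_deriv[OF assms] Cons)
  then show ?case by (simp add: add_divide_distrib)
qed

lemma tm_cont:
  assumes "schwartz q" "w \<noteq> 0"
  shows "isCont (\<lambda>w. tm q t c w) w"
proof -
  obtain a i j m where t: "t = (a,i,j,m)" by (cases t) auto
  have "isCont (\<lambda>w. (deriv^^i) q (w - c)) w"
    by (rule isCont_o2[OF _ dq_cont[OF assms(1)]]) (auto intro!: continuous_intros)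
  then show ?thesis using assms(2) unfolding t tm_def
    by (auto intro!: continuous_intros)
qed

lemma ev_cont:
  assumes "schwartz q" "w \<noteq> 0"
  shows "isCont (\<lambda>w. ev q L c w) w"
  by (induction L) (auto intro!: continuous_intros tm_cont[OF assms])

lemma ev_cont_on:
  assumes "schwartz q" "0 \<notin> S"
  shows "continuous_on S (\<lambda>w. ev q L c w)"
  using assms ev_cont by (metis continuous_at_imp_continuous_on)

lemma ev_zero:
  assumes "\<forall>t. t \<notin> {1/2..2} \<longrightarrow> q t = 0" "w - c \<notin> {1/2..2::real}"
  shows "ev q L c w = 0"
proof (induction L)
  case (Cons t L)
  obtain a i j m where t: "t = (a,i,j,m)" by (cases t) auto
  then show ?case using Cons dq_zero[OF assms] by (simp add: tm_def)
qed simp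

definition Bq :: "(real \<Rightarrow> real) \<Rightarrow> nat \<Rightarrow> real" where
  "Bq q i = (SOME B. \<forall>t. \<bar>(deriv^^i) q t\<bar> \<le> B)"

lemma Bq: "schwartz q \<Longrightarrow> \<bar>(deriv^^i) q t\<bar> \<le> Bq q i"
  using someI_ex[OF dq_bound] unfolding Bq_def by blast

definition bnd :: "(real \<Rightarrow> real) \<Rightarrow> trm list \<Rightarrow> real" where
  "bnd q L = sum_list (map (\<lambda>(a,i,j,m). \<bar>a\<bar> * 8 ^ j * 2 ^ m * Bq q i) L)"

lemma tm_bound:
  assumes "schwartz q" "\<forall>t. t \<notin> {1/2..2} \<longrightarrow> q t = 0" "w \<ge> 1/8"
  shows "\<bar>tm q t c w\<bar> \<le> (case t of (a,i,j,m) \<Rightarrow> \<bar>a\<bar> * 8 ^ j * 2 ^ m * Bq q i)"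
proof -
  obtain a i j m where t: "t = (a,i,j,m)" by (cases t) auto
  have B0: "0 \<le> Bq q i" using Bq[OF assms(1), of i 0] by linarith
  show ?thesis
  proof (cases "w - c \<in> {1/2..2}")
    case False
    then show ?thesis using dq_zero[OF assms(2) False] B0 by (simp add: tm_def t)
  next
    case True
    have "\<bar>inverse w ^ j\<bar> \<le> 8 ^ j"
    proof -
      have "\<bar>inverse w\<bar> \<le> 8" using assms(3) by (simp add: abs_if field_simps)
      then show ?thesis by (metis power_abs power_mono abs_ge_zero)
    qed
    moreover have "\<bar>(w - c) ^ m\<bar> \<le> 2 ^ m"
      using True by (simp add: power_abs[symmetric] power_mono)
    moreover have "\<bar>(deriv^^i) q (w - c)\<bar> \<le> Bq q i" by (rule Bq[OF assms(1)])
    ultimately have "\<bar>inverse w ^ j\<bar> * \<bar>(w - c) ^ m\<bar> * \<bar>(deriv^^i) q (w - c)\<bar> \<le> 8 ^ j * 2 ^ m * Bq q i"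
      by (intro mult_mono) auto
    then show ?thesis by (simp add: tm_def t abs_mult mult.assoc mult_left_mono)
  qed
qed

lemma ev_bound:
  assumes "schwartz q" "\<forall>t. t \<notin> {1/2..2} \<longrightarrow> q t = 0" "w \<ge> 1/8"
  shows "\<bar>ev q L c w\<bar> \<le> bnd q L"
proof (induction L)
  case Nil then show ?case by (simp add: bnd_def)
next
  case (Cons t L)
  have "\<bar>ev q (t # L) c w\<bar> \<le> \<bar>tm q t c w\<bar> + \<bar>ev q L c w\<bar>" by simp
  also have "\<dots> \<le> (case t of (a,i,j,m) \<Rightarrow> \<bar>a\<bar> * 8 ^ j * 2 ^ m * Bq q i) + bnd q L"
    using tm_bound[OF assms] Cons by (intro add_mono) auto
  finally show ?case by (simp add: bnd_def split: prod.splits)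
qed

lemma cis_vd:
  assumes "(th has_real_derivative D) (at w)"
  shows "((\<lambda>w. cis (th w)) has_vector_derivative (D *\<^sub>R (\<i> * cis (th w)))) (at w)"
proof -
  have "(th has_derivative (\<lambda>t. t * D)) (at w)" using assms by (simp add: has_field_derivative_def mult.commute[of _ D])
  from has_derivative_cis[OF this] show ?thesis
    by (simp add: has_vector_derivative_def scaleR_scaleR mult.commute)
qed



definition IL :: "(real \<Rightarrow> real) \<Rightarrow> trm list \<Rightarrow> real \<Rightarrow> real \<Rightarrow> complex" where
  "IL q L c lam = integral {1/8..4} (\<lambda>w. ev q L c w *\<^sub>R cis (-2*pi*lam*w^2))"

lemma ibp:
  assumes q: "schwartz q" and supp: "\<forall>t. t \<notin> {1/2..2} \<longrightarrow> q t = 0" and c: "\<bar>c\<bar> \<le> 1/4"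
  shows "IL q (stp L) c lam = (4*pi*\<i>*lam) * IL q L c lam"
proof -
  let ?f = "\<lambda>w. ev q L c w / w"
  let ?f' = "\<lambda>w. ev q (stp L) c w"
  let ?g = "\<lambda>w. cis (-2*pi*lam*w^2)"
  let ?g' = "\<lambda>w. (-4*pi*lam*w) *\<^sub>R (\<i> * cis (-2*pi*lam*w^2))"
  have nz: "0 \<notin> {1/8..4::real}" by auto
  have cf: "continuous_on {1/8..4} ?f"
    by (intro continuous_intros ev_cont_on[OF q nz]) auto
  have cg: "continuous_on {1/8..4} ?g" by (intro continuous_intros)
  have df: "(?f has_vector_derivative ?f' x) (at x)" if "x \<in> {1/8..4}" for x
    using ev_deriv[OF q, of x L c] that has_real_derivative_iff_has_vector_derivative by auto
  have dg: "(?g has_vector_derivative ?g' x) (at x)" for x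
  proof -
    have "((\<lambda>w. -2*pi*lam*w^2) has_real_derivative (-4*pi*lam*x)) (at x)"
      by (auto intro!: derivative_eq_intros)
    from cis_vd[OF this] show ?thesis .
  qed
  have int1: "(\<lambda>x. ?f x *\<^sub>R ?g' x) integrable_on {1/8..4}"
    by (intro integrable_continuous_interval continuous_intros cf)
  define J where "J = integral {1/8..4} (\<lambda>x. ?f x *\<^sub>R ?g' x)"
  have f4: "?f 4 = 0" "?f (1/8) = 0"
  proof -
    have "4 - c \<notin> {1/2..2}" "1/8 - c \<notin> {1/2..2}" using c by (auto simp: abs_le_iff)
    then show "?f 4 = 0" "?f (1/8) = 0" using ev_zero[OF supp] by auto
  qed
  have "((\<lambda>x. ?f x *\<^sub>R ?g' x) has_integral (?f 4 *\<^sub>R ?g 4 - ?f (1/8) *\<^sub>R ?g (1/8) - (- J))) {1/8..4}"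
    using integrable_integral[OF int1] unfolding J_def by (simp only: f4 scaleR_zero_left diff_zero minus_minus diff_0)
  from integration_by_parts[OF bounded_bilinear_scaleR _ cf cg df dg this]
  have "((\<lambda>x. ?f' x *\<^sub>R ?g x) has_integral (- J)) {1/8..4}" by auto
  then have e1: "IL q (stp L) c lam = - J" unfolding IL_def by (rule integral_unique)
  have "J = integral {1/8..4} (\<lambda>x. (-4*pi*\<i>*lam) * (ev q L c x *\<^sub>R ?g x))"
    unfolding J_def
    by (rule integral_cong) (auto simp: scaleR_conv_of_real field_simps)
  also have "\<dots> = (-4*pi*\<i>*lam) * IL q L c lam"
    unfolding IL_def by (rule integral_mult_right)
  finally show ?thesis using e1 by simp
qed

lemma ibp_iter:
  assumes q: "schwartz q" and supp: "\<forall>t. t \<notin> {1/2..2} \<longrightarrow> q t = 0" and c: "\<bar>c\<bar> \<le> 1/4"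
  shows "IL q ((stp^^k) L) c lam = (4*pi*\<i>*lam)^k * IL q L c lam"
  by (induction k) (simp_all add: ibp[OF assms] )

lemma IL_bound:
  assumes q: "schwartz q" and supp: "\<forall>t. t \<notin> {1/2..2} \<longrightarrow> q t = 0"
  shows "norm (IL q L c lam) \<le> 4 * bnd q L"
proof -
  have nz: "0 \<notin> {1/8..4::real}" by auto
  have "norm (IL q L c lam) \<le> integral {1/8..4::real} (\<lambda>_. bnd q L)"
    unfolding IL_def
  proof (rule integral_norm_bound_integral)
    show "(\<lambda>w. ev q L c w *\<^sub>R cis (-2*pi*lam*w^2)) integrable_on {1/8..4}"
      by (intro integrable_continuous_interval continuous_intros ev_cont_on[OF q nz])
  qed (auto simp: norm_scaleR intro!: ev_bound[OF q supp])
  also have "\<dots> = (4 - 1/8) * bnd q L" by simp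
  also have "\<dots> \<le> 4 * bnd q L"
  proof -
    have "0 \<le> bnd q L" using ev_bound[OF q supp, of 1 L c] by linarith
    then show ?thesis by simp
  qed
  finally show ?thesis .
qed



lemma core_bound:
  assumes q: "schwartz q" and supp: "\<forall>t. t \<notin> {1/2..2} \<longrightarrow> q t = 0" and c: "\<bar>c\<bar> \<le> 1/4"
    and lam: "lam \<noteq> 0"
  shows "norm (IL q [(1,0,0,m)] c lam) \<le> 4 * bnd q ((stp^^k) [(1,0,0,m)]) / \<bar>lam\<bar>^k"
proof -
  have e: "IL q ((stp^^k) [(1,0,0,m)]) c lam = (4*pi*\<i>*lam)^k * IL q [(1,0,0,m)] c lam"
    by (rule ibp_iter[OF q supp c])
  have n: "norm ((4*pi*\<i>*lam)^k) = (4*pi*\<bar>lam\<bar>)^k"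
    by (simp add: norm_power norm_mult)
  have "(4*pi*\<bar>lam\<bar>)^k * norm (IL q [(1,0,0,m)] c lam) \<le> 4 * bnd q ((stp^^k) [(1,0,0,m)])"
    using IL_bound[OF q supp, of "(stp^^k) [(1,0,0,m)]" c lam] e n by (simp add: norm_mult)
  moreover have "\<bar>lam\<bar>^k \<le> (4*pi*\<bar>lam\<bar>)^k"
  proof (intro power_mono)
    have "1 * \<bar>lam\<bar> \<le> (4*pi) * \<bar>lam\<bar>" using pi_gt3 by (intro mult_right_mono) auto
    then show "\<bar>lam\<bar> \<le> 4*pi*\<bar>lam\<bar>" by simp
  qed simp
  moreover have "0 < \<bar>lam\<bar>^k" using lam by simp
  ultimately have "\<bar>lam\<bar>^k * norm (IL q [(1,0,0,m)] c lam) \<le> 4 * bnd q ((stp^^k) [(1,0,0,m)])"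
    by (meson mult_right_mono norm_ge_zero order_trans)
  then show ?thesis using \<open>0 < \<bar>lam\<bar>^k\<close> by (simp add: field_simps)
qed



definition g0 :: "(real \<Rightarrow> real) \<Rightarrow> nat \<Rightarrow> real \<Rightarrow> real \<Rightarrow> real \<Rightarrow> real \<Rightarrow> real \<Rightarrow> complex" where
 "g0 q dd b N nu phi t = (if -b < t then (1/sqrt(t+b) * q(sqrt(t+b)/N) * (real dd * sqrt(t+b)^(dd-1)))
     *\<^sub>R cis(-2*pi * sqrt(t+b)*phi - 2*pi*t*nu) else 0)"

lemma g0_zero:
  assumes supp: "\<forall>t. t \<notin> {1/2..2} \<longrightarrow> q t = 0" and N: "N > 0"
    and t: "t \<notin> {N^2/4 - b .. 4*N^2 - b}"
  shows "g0 q dd b N nu phi t = 0"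
proof (cases "-b < t")
  case True
  have "sqrt(t+b)/N \<notin> {1/2..2}"
  proof
    assume "sqrt(t+b)/N \<in> {1/2..2}"
    then have h: "N/2 \<le> sqrt(t+b)" "sqrt(t+b) \<le> 2*N" using N by (auto simp: field_simps)
    have "(N/2)^2 \<le> sqrt(t+b)^2" using h N by (intro power_mono) auto
    moreover have "sqrt(t+b)^2 \<le> (2*N)^2" using h N True by (intro power_mono) auto
    moreover have "sqrt(t+b)^2 = t+b" using True by simp
    ultimately have "N^2/4 \<le> t + b" "t + b \<le> 4*N^2" by (simp_all add: power_divide power_mult_distrib)
    then show False using t by simp
  qed
  then show ?thesis using supp by (simp add: g0_def)
qed (simp add: g0_def)

lemma g0_cont:
  assumes q: "schwartz q" and N: "N > 0"
  shows "continuous_on {N^2/4 - b .. 4*N^2 - b} (g0 q dd b N nu phi)"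
proof -
  let ?S = "{N^2/4 - b .. 4*N^2 - b}"
  have pos: "t + b > 0" if "t \<in> ?S" for t using that N by (auto intro: less_le_trans[of 0 "N^2/4"])
  have cq: "continuous_on ?S (\<lambda>t. q (sqrt(t+b)/N))"
  proof -
    have "continuous_on UNIV q" using dq_cont[OF q, where i=0] by (simp add: continuous_at_imp_continuous_on)
    moreover have "continuous_on ?S (\<lambda>t. sqrt(t+b)/N)" using N by (intro continuous_intros) auto
    ultimately show ?thesis by (rule continuous_on_compose2) auto
  qed
  have "continuous_on ?S (\<lambda>t. (1/sqrt(t+b) * q(sqrt(t+b)/N) * (real dd * sqrt(t+b)^(dd-1)))
     *\<^sub>R cis(-2*pi * sqrt(t+b)*phi - 2*pi*t*nu))"
  proof -
    have ns: "\<forall>t\<in>?S. sqrt(t+b) \<noteq> 0" using pos by (metis less_irrefl real_sqrt_eq_zero_cancel_iff)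
    show ?thesis by (intro continuous_intros cq ns)
  qed
  moreover have "\<And>t. t \<in> ?S \<Longrightarrow> g0 q dd b N nu phi t = (1/sqrt(t+b) * q(sqrt(t+b)/N) * (real dd * sqrt(t+b)^(dd-1)))
     *\<^sub>R cis(-2*pi * sqrt(t+b)*phi - 2*pi*t*nu)"
    using pos unfolding g0_def by (simp add: add.commute neg_less_iff_less less_diff_eq[symmetric])
  ultimately show ?thesis using continuous_on_cong by (metis (no_types, lifting))
qed



lemma pointwise_sub:
  assumes dd: "dd \<ge> 1" and N: "N > 0" and nu: "nu \<noteq> 0" and c: "c = phi / (2*N*nu)"
    and u: "w - c \<ge> 1/2"
  shows "(2*N^2*(w-c)) *\<^sub>R g0 q dd b N nu phi (N^2*(w-c)^2 - b)
    = (complex_of_real (2*real dd*N^dd) * cis (2*pi*(N^2*nu*c^2 + b*nu))) *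
      (ev q [(1,0,0,dd-1)] c w *\<^sub>R cis (-2*pi*(N^2*nu)*w^2))"
proof -
  define u where "u = w - c"
  have upos: "u > 0" using u unfolding u_def by simp
  have Nu: "N*u > 0" using N upos by simp
  have gt: "-b < N^2*u^2 - b" using N upos by simp
  have sq: "sqrt (N^2*u^2 - b + b) = N*u" using Nu by (simp add: power_mult_distrib[symmetric])
  have qq: "q (N*u/N) = q u" using N by simp
  have phi: "phi = 2*N*nu*c" using c N nu by simp
  have r: "2*N^2*u * (1/(N*u) * q u * (real dd * (N*u)^(dd-1))) = 2*real dd*N^dd * (u^(dd-1) * q u)"
  proof -
    obtain e where e: "dd = Suc e" using dd by (cases dd) auto
    show ?thesis using N upos unfolding e by (simp add: field_simps power_mult_distrib power2_eq_square)
  qed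
  have arg: "-2*pi * (N*u)*phi - 2*pi*(N^2*u^2 - b)*nu = 2*pi*(N^2*nu*c^2 + b*nu) + (-2*pi*(N^2*nu)*w^2)"
    unfolding phi u_def by (simp add: algebra_simps power2_eq_square)
  have evL: "ev q [(1,0,0,dd-1)] c w = u^(dd-1) * q u" by (simp add: ev_def tm_def u_def)
  have "(2*N^2*(w-c)) *\<^sub>R g0 q dd b N nu phi (N^2*(w-c)^2 - b)
      = (2*N^2*u * (1/(N*u) * q u * (real dd * (N*u)^(dd-1)))) *\<^sub>R cis (-2*pi * (N*u)*phi - 2*pi*(N^2*u^2 - b)*nu)"
    unfolding g0_def u_def[symmetric] using gt sq qq by simp
  also have "\<dots> = (2*real dd*N^dd * (u^(dd-1) * q u)) *\<^sub>R cis (2*pi*(N^2*nu*c^2 + b*nu) + (-2*pi*(N^2*nu)*w^2))"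
    by (simp only: r arg)
  also have "\<dots> = complex_of_real (2*real dd*N^dd * (u^(dd-1) * q u)) * (cis (2*pi*(N^2*nu*c^2 + b*nu)) * cis (-2*pi*(N^2*nu)*w^2))"
    by (simp only: scaleR_conv_of_real cis_mult)
  also have "\<dots> = (complex_of_real (2*real dd*N^dd) * cis (2*pi*(N^2*nu*c^2 + b*nu))) *
      (ev q [(1,0,0,dd-1)] c w *\<^sub>R cis (-2*pi*(N^2*nu)*w^2))"
    unfolding evL scaleR_conv_of_real of_real_mult by (simp only: mult_ac)
  finally show ?thesis .
qed



lemma t_int:
  assumes q: "schwartz q" and supp: "\<forall>t. t \<notin> {1/2..2} \<longrightarrow> q t = 0"
    and dd: "dd \<ge> 1" and N: "N \<ge> 2" and nu: "\<bar>nu\<bar> \<ge> 1" and phi: "\<bar>phi\<bar> \<le> 1"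
  shows "norm (\<integral>t. g0 q dd b N nu phi t \<partial>lborel)
     \<le> 2*real dd*N^dd * (4 * bnd q ((stp^^k) [(1,0,0,dd-1)]) / \<bar>N^2*nu\<bar>^k)"
proof -
  define S where "S = {N^2/4 - b .. 4*N^2 - b}"
  define c where "c = phi / (2*N*nu)"
  define lam where "lam = N^2*nu"
  define L0 where "L0 = [(1::real,0::nat,0::nat,dd-1)]"
  define h where "h = (\<lambda>w. ev q L0 c w *\<^sub>R cis (-2*pi*lam*w^2))"
  define K where "K = complex_of_real (2*real dd*N^dd) * cis (2*pi*(N^2*nu*c^2 + b*nu))"
  define gs where "gs = (\<lambda>w. N^2*(w-c)^2 - b)"
  have Npos: "N > 0" using N by simp
  have nu0: "nu \<noteq> 0" using nu by auto
  have cb: "\<bar>c\<bar> \<le> 1/4"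
  proof -
    have "\<bar>c\<bar> = \<bar>phi\<bar> / (2*N*\<bar>nu\<bar>)" unfolding c_def using Npos by (simp add: abs_mult)
    also have "\<dots> \<le> 1 / (2*N*\<bar>nu\<bar>)" using phi Npos nu0 by (intro divide_right_mono) auto
    also have "\<dots> \<le> 1 / 4"
    proof -
      have "4 \<le> 2*N*\<bar>nu\<bar>" using N nu mult_mono[of 2 N 1 "\<bar>nu\<bar>"] by simp
      then show ?thesis by (simp add: field_simps)
    qed
    finally show ?thesis .
  qed
  have zero: "\<And>t. t \<notin> S \<Longrightarrow> g0 q dd b N nu phi t = 0"
    using g0_zero[OF supp Npos] unfolding S_def by blast
  have cont: "continuous_on S (g0 q dd b N nu phi)"
    using g0_cont[OF q Npos] unfolding S_def by blast
  have si: "set_integrable lborel S (g0 q dd b N nu phi)"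
    unfolding set_integrable_def S_def by (rule borel_integrable_compact) (use cont S_def in auto)
  have e1: "(\<integral>t. g0 q dd b N nu phi t \<partial>lborel) = integral S (g0 q dd b N nu phi)"
  proof -
    have "(\<integral>t. g0 q dd b N nu phi t \<partial>lborel) = (\<integral>t. indicator S t *\<^sub>R g0 q dd b N nu phi t \<partial>lborel)"
      by (rule Bochner_Integration.integral_cong) (auto simp: indicator_def zero)
    also have "\<dots> = integral S (g0 q dd b N nu phi)"
      using set_borel_integral_eq_integral(2)[OF si] unfolding set_lebesgue_integral_def .
    finally show ?thesis .
  qed
  define a1 where "a1 = 1/2 + c"
  define a2 where "a2 = 2 + c"
  have gsa: "gs a1 = N^2/4 - b" "gs a2 = 4*N^2 - b" unfolding gs_def a1_def a2_def
    by (simp_all add: power2_eq_square)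
  have img: "gs ` {a1..a2} \<subseteq> S"
  proof
    fix y assume "y \<in> gs ` {a1..a2}"
    then obtain w where w: "w \<in> {a1..a2}" "y = gs w" by auto
    have u: "1/2 \<le> w - c" "w - c \<le> 2" using w unfolding a1_def a2_def by auto
    have "(1/2)^2 \<le> (w-c)^2" "(w-c)^2 \<le> 2^2" using u by (intro power_mono; simp)+
    then have "N^2 * (1/4) \<le> N^2 * (w-c)^2" "N^2 * (w-c)^2 \<le> N^2 * 4"
      by (intro mult_left_mono; simp add: power2_eq_square)+
    then show "y \<in> S" unfolding S_def w(2) gs_def by auto
  qed
  have sub: "((\<lambda>w. (2*N^2*(w-c)) *\<^sub>R g0 q dd b N nu phi (gs w)) has_integral integral {gs a1..gs a2} (g0 q dd b N nu phi)) {a1..a2}"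
  proof (rule has_integral_substitution[where c = "N^2/4 - b" and d = "4*N^2 - b"])
    show "a1 \<le> a2" unfolding a1_def a2_def by simp
    show "gs a1 \<le> gs a2" unfolding gsa using Npos by simp
    show "gs ` {a1..a2} \<subseteq> {N^2/4 - b .. 4*N^2 - b}" using img unfolding S_def .
    show "continuous_on {N^2/4 - b .. 4*N^2 - b} (g0 q dd b N nu phi)" using cont unfolding S_def .
    fix x show "(gs has_real_derivative 2*N^2*(x-c)) (at x within {a1..a2})"
      unfolding gs_def by (auto intro!: derivative_eq_intros)
  qed
  have hint: "h integrable_on {a1..a2}"
    unfolding h_def by (intro integrable_continuous_interval continuous_intros ev_cont_on[OF q])
       (use cb in \<open>auto simp: a1_def a2_def abs_le_iff\<close>)
  have e2: "integral S (g0 q dd b N nu phi) = K * integral {a1..a2} h"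
  proof -
    have "integral S (g0 q dd b N nu phi) = integral {a1..a2} (\<lambda>w. (2*N^2*(w-c)) *\<^sub>R g0 q dd b N nu phi (gs w))"
      using sub unfolding gsa S_def by (simp add: integral_unique)
    also have "\<dots> = integral {a1..a2} (\<lambda>w. K * h w)"
    proof (rule integral_cong)
      fix w assume "w \<in> {a1..a2}"
      then have "w - c \<ge> 1/2" unfolding a1_def by auto
      from pointwise_sub[OF dd Npos nu0 c_def this]
      show "(2*N^2*(w-c)) *\<^sub>R g0 q dd b N nu phi (gs w) = K * h w"
        unfolding gs_def K_def h_def L0_def lam_def .
    qed
    also have "\<dots> = K * integral {a1..a2} h" by (rule integral_mult_right)
    finally show ?thesis .
  qed
  have e3: "integral {a1..a2} h = IL q L0 c lam"
  proof -
    have "(h has_integral integral {a1..a2} h) {a1..a2}" using hint by (rule integrable_integral)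
    then have "(h has_integral integral {a1..a2} h) {1/8..4}"
    proof (rule has_integral_on_superset)
      fix w assume "w \<notin> {a1..a2}"
      then have "w - c \<notin> {1/2..2}" unfolding a1_def a2_def by auto
      then show "h w = 0" unfolding h_def using ev_zero[OF supp] by simp
    next
      show "{a1..a2} \<subseteq> {1/8..4}" using cb unfolding a1_def a2_def by (auto simp: abs_le_iff)
    qed
    then show ?thesis unfolding IL_def h_def by (simp add: integral_unique)
  qed
  have lam0: "lam \<noteq> 0" unfolding lam_def using Npos nu0 by simp
  have "norm (\<integral>t. g0 q dd b N nu phi t \<partial>lborel) = 2*real dd*N^dd * norm (IL q L0 c lam)"
    unfolding e1 e2 e3 K_def using Npos by (simp add: norm_mult norm_power)
  also have "\<dots> \<le> 2*real dd*N^dd * (4 * bnd q ((stp^^k) L0) / \<bar>lam\<bar>^k)"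
    using core_bound[OF q supp cb lam0, of "dd-1" k] Npos unfolding L0_def
    by (intro mult_left_mono) auto
  finally show ?thesis unfolding lam_def L0_def .
qed



lemma borel_measurable_cis' [measurable]:
  "f \<in> borel_measurable M \<Longrightarrow> (\<lambda>x. cis (f x)) \<in> borel_measurable M"
proof -
  have "(cis :: real \<Rightarrow> complex) \<in> borel_measurable borel"
    by (intro borel_measurable_continuous_onI continuous_intros)
  then show "f \<in> borel_measurable M \<Longrightarrow> (\<lambda>x. cis (f x)) \<in> borel_measurable M"
    using measurable_compose by blast
qed

lemma sphere_ft_eq:
  assumes t: "t \<ge> 0"
  shows "sphere_ft t (x::'a::euclidean_space) = (real DIM('a) * t^(DIM('a)-1)) *\<^sub>R
    (\<integral>\<eta>. indicator (cball (0::'a) 1 - {0}) \<eta> *\<^sub>R cis (-2*pi*(t * (x \<bullet> sgn \<eta>))) \<partial>lborel)"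
proof -
  let ?B = "cball (0::'a) 1 - {0}"
  let ?M = "density lborel (\<lambda>\<eta>. ennreal (indicator ?B \<eta>))"
  have dens: "density lborel (indicator ?B) = ?M"
    by (simp add: ennreal_indicator)
  have c0: "0 \<le> real DIM('a) * t^(DIM('a)-1)" using t by simp
  have "sphere_ft t x = (\<integral>\<xi>. cis (- 2 * pi * (x \<bullet> \<xi>)) \<partial>(density (distr ?M borel (\<lambda>\<eta>. t *\<^sub>R sgn \<eta>)) (\<lambda>_. ennreal (real DIM('a) * t ^ (DIM('a) - 1)))))"
    unfolding sphere_ft_def sphere_measure_def dens ..
  also have "\<dots> = (\<integral>\<xi>. (real DIM('a) * t ^ (DIM('a) - 1)) *\<^sub>R cis (- 2 * pi * (x \<bullet> \<xi>)) \<partial>(distr ?M borel (\<lambda>\<eta>. t *\<^sub>R sgn \<eta>)))"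
    by (rule integral_density) (use c0 in auto)
  also have "\<dots> = (\<integral>\<eta>. (real DIM('a) * t ^ (DIM('a) - 1)) *\<^sub>R cis (- 2 * pi * (x \<bullet> (t *\<^sub>R sgn \<eta>))) \<partial>?M)"
    by (rule integral_distr) auto
  also have "\<dots> = (\<integral>\<eta>. indicator ?B \<eta> *\<^sub>R ((real DIM('a) * t ^ (DIM('a) - 1)) *\<^sub>R cis (- 2 * pi * (x \<bullet> (t *\<^sub>R sgn \<eta>)))) \<partial>lborel)"
    by (rule integral_density) (auto intro!: borel_measurable_indicator)
  also have "\<dots> = (\<integral>\<eta>. (real DIM('a) * t ^ (DIM('a) - 1)) *\<^sub>R (indicator ?B \<eta> *\<^sub>R cis (-2*pi*(t * (x \<bullet> sgn \<eta>)))) \<partial>lborel)"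
    by (rule Bochner_Integration.integral_cong) (auto simp: mult_ac)
  also have "\<dots> = (real DIM('a) * t^(DIM('a)-1)) *\<^sub>R (\<integral>\<eta>. indicator ?B \<eta> *\<^sub>R cis (-2*pi*(t * (x \<bullet> sgn \<eta>))) \<partial>lborel)"
    by (rule integral_scaleR_right)
  finally show ?thesis .
qed



lemma borel_measurable_cnj' [measurable]:
  "g \<in> borel_measurable M \<Longrightarrow> (\<lambda>x. cnj (g x :: complex)) \<in> borel_measurable M"
proof -
  have "(cnj :: complex \<Rightarrow> complex) \<in> borel_measurable borel"
    by (intro borel_measurable_continuous_onI continuous_intros)
  then show "g \<in> borel_measurable M \<Longrightarrow> (\<lambda>x. cnj (g x)) \<in> borel_measurable M"
    using measurable_compose by blast
qed

lemma nn_reflect: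
  fixes g :: "'a::euclidean_space \<Rightarrow> ennreal"
  assumes g: "g \<in> borel_measurable borel"
  shows "(\<integral>\<^sup>+x. g (y - x) \<partial>lborel) = (\<integral>\<^sup>+x. g x \<partial>lborel)"
proof -
  have "(\<integral>\<^sup>+x. g x \<partial>lborel) = (\<integral>\<^sup>+x. g x \<partial>(density (distr lborel borel (\<lambda>x. y + (-1) *\<^sub>R x)) (\<lambda>_. \<bar>-1::real\<bar>^DIM('a))))"
    using lborel_affine[of "-1::real" y] by simp
  also have "\<dots> = (\<integral>\<^sup>+x. g x \<partial>(distr lborel borel (\<lambda>x. y + (-1) *\<^sub>R x)))"
    by (simp add: density_1)
  also have "\<dots> = (\<integral>\<^sup>+x. g (y + (-1) *\<^sub>R x) \<partial>lborel)"
    using g by (intro nn_integral_distr) auto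
  finally show ?thesis by simp
qed

lemma conv_meas:
  fixes f :: "'a::euclidean_space \<Rightarrow> complex"
  assumes f: "integrable lborel f"
  shows "conv f (tilde f) \<in> borel_measurable lborel"
proof -
  have [measurable]: "f \<in> borel_measurable borel" using borel_measurable_integrable[OF f] by simp
  have "(\<lambda>(x,y). f y * tilde f (x - y)) \<in> borel_measurable (lborel \<Otimes>\<^sub>M lborel)"
    unfolding tilde_def by measurable
  then have "(\<lambda>x. \<integral>y. f y * tilde f (x - y) \<partial>lborel) \<in> borel_measurable lborel"
    by (rule lborel.borel_measurable_lebesgue_integral[where f = "\<lambda>x y. f y * tilde f (x - y)"])
  then show ?thesis unfolding conv_def[abs_def] .
qed

lemma conv_int:
  fixes f :: "'a::euclidean_space \<Rightarrow> complex"
  assumes f: "integrable lborel f"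
  shows "integrable lborel (conv f (tilde f))"
proof (rule integrableI_bounded)
  show "conv f (tilde f) \<in> borel_measurable lborel" by (rule conv_meas[OF f])
  have [measurable]: "f \<in> borel_measurable borel" using borel_measurable_integrable[OF f] by simp
  have m2: "(\<lambda>(x,y). ennreal (norm (f y * tilde f (x - y)))) \<in> borel_measurable (lborel \<Otimes>\<^sub>M lborel)"
    unfolding tilde_def by measurable
  have "(\<integral>\<^sup>+x. ennreal (norm (conv f (tilde f) x)) \<partial>lborel) \<le> (\<integral>\<^sup>+x. (\<integral>\<^sup>+y. ennreal (norm (f y * tilde f (x - y))) \<partial>lborel) \<partial>lborel)"
  proof (rule nn_integral_mono)
    fix x
    show "ennreal (norm (conv f (tilde f) x)) \<le> (\<integral>\<^sup>+y. ennreal (norm (f y * tilde f (x - y))) \<partial>lborel)"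
    proof (cases "integrable lborel (\<lambda>y. f y * tilde f (x - y))")
      case True
      then show ?thesis unfolding conv_def by (rule integral_norm_bound_ennreal)
    next
      case False
      then show ?thesis unfolding conv_def by (simp add: not_integrable_integral_eq)
    qed
  qed
  also have "\<dots> = (\<integral>\<^sup>+y. (\<integral>\<^sup>+x. ennreal (norm (f y * tilde f (x - y))) \<partial>lborel) \<partial>lborel)"
    using lborel_pair.Fubini'[OF m2] by simp
  also have "\<dots> = (\<integral>\<^sup>+y. ennreal (norm (f y)) * (\<integral>\<^sup>+x. ennreal (norm (f x)) \<partial>lborel) \<partial>lborel)"
  proof (rule nn_integral_cong)
    fix y
    have "(\<integral>\<^sup>+x. ennreal (norm (f y * tilde f (x - y))) \<partial>lborel) = (\<integral>\<^sup>+x. ennreal (norm (f y)) * ennreal (norm (f (y - x))) \<partial>lborel)"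
      by (rule nn_integral_cong) (simp add: tilde_def norm_mult ennreal_mult)
    also have "\<dots> = ennreal (norm (f y)) * (\<integral>\<^sup>+x. ennreal (norm (f (y - x))) \<partial>lborel)"
      by (rule nn_integral_cmult) measurable
    also have "(\<integral>\<^sup>+x. ennreal (norm (f (y - x))) \<partial>lborel) = (\<integral>\<^sup>+x. ennreal (norm (f x)) \<partial>lborel)"
      by (rule nn_reflect[where g = "\<lambda>x. ennreal (norm (f x))"]) measurable
    finally show "(\<integral>\<^sup>+x. ennreal (norm (f y * tilde f (x - y))) \<partial>lborel) = ennreal (norm (f y)) * (\<integral>\<^sup>+x. ennreal (norm (f x)) \<partial>lborel)" .
  qed
  also have "\<dots> = (\<integral>\<^sup>+x. ennreal (norm (f x)) \<partial>lborel) * (\<integral>\<^sup>+x. ennreal (norm (f x)) \<partial>lborel)"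
    by (rule nn_integral_multc) measurable
  also have "\<dots> < \<infinity>"
    using f unfolding integrable_iff_bounded by (simp add: ennreal_mult_less_top)
  finally show "(\<integral>\<^sup>+x. ennreal (norm (conv f (tilde f) x)) \<partial>lborel) < \<infinity>" .
qed



lemma (in pair_sigma_finite) integrable_prod_mult:
  fixes g :: "_ \<Rightarrow> real" and h :: "_ \<Rightarrow> real"
  assumes g: "integrable M1 g" and h: "integrable M2 h"
  shows "integrable (M1 \<Otimes>\<^sub>M M2) (\<lambda>p. g (fst p) * h (snd p))"
proof (rule Fubini_integrable)
  have [measurable]: "g \<in> borel_measurable M1" "h \<in> borel_measurable M2"
    using g h by auto
  show "(\<lambda>p. g (fst p) * h (snd p)) \<in> borel_measurable (M1 \<Otimes>\<^sub>M M2)" by measurable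
  have "integrable M1 (\<lambda>x. \<bar>g x\<bar> * (\<integral>y. \<bar>h y\<bar> \<partial>M2))"
    using g by (intro integrable_mult_left) auto
  then show "integrable M1 (\<lambda>x. \<integral>y. norm (g (fst (x, y)) * h (snd (x, y))) \<partial>M2)"
    by (simp add: abs_mult)
  show "AE x in M1. integrable M2 (\<lambda>y. g (fst (x, y)) * h (snd (x, y)))"
    using h by auto
qed

lemma q_meas [measurable]:
  assumes "schwartz q"
  shows "q \<in> borel_measurable borel"
proof -
  have "continuous_on UNIV q" using dq_cont[OF assms, where i=0] by (simp add: continuous_at_imp_continuous_on)
  then show ?thesis by (rule borel_measurable_continuous_onI)
qed

lemma g0_meas:
  assumes q: "schwartz q" and [measurable]: "f \<in> borel_measurable M" "g \<in> borel_measurable M"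
  shows "(\<lambda>x. g0 q dd b N nu (f x) (g x)) \<in> borel_measurable M"
proof -
  have [measurable]: "q \<in> borel_measurable borel" using q by (rule q_meas)
  show ?thesis unfolding g0_def by measurable
qed

lemma g0_bound:
  assumes q: "schwartz q" and supp: "\<forall>t. t \<notin> {1/2..2} \<longrightarrow> q t = 0"
    and dd: "dd \<ge> 1" and N: "N \<ge> 2"
  shows "norm (g0 q dd b N nu phi t) \<le> indicator {N^2/4 - b .. 4*N^2 - b} t * (Bq q 0 * real dd * (2*N)^(dd-1))"
proof (cases "t \<in> {N^2/4 - b .. 4*N^2 - b}")
  case False
  then show ?thesis using g0_zero[OF supp, of N t b dd nu phi] N by simp
next
  case True
  define s where "s = sqrt (t+b)"
  have tb: "N^2/4 \<le> t + b" "t + b \<le> 4*N^2" using True by auto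
  have gt: "-b < t" using tb N by (smt (verit) divide_pos_pos zero_less_power)
  have s1: "N/2 \<le> s" unfolding s_def using real_sqrt_le_mono[OF tb(1)] N
    by (simp add: real_sqrt_divide)
  have s2: "s \<le> 2*N" unfolding s_def using real_sqrt_le_mono[OF tb(2)] N
    by (simp add: real_sqrt_mult)
  have spos: "s > 0" using s1 N by simp
  have B0: "\<bar>q (s/N)\<bar> \<le> Bq q 0" using Bq[OF q, of 0 "s/N"] by simp
  have "norm (g0 q dd b N nu phi t) = \<bar>1/s * q(s/N) * (real dd * s^(dd-1))\<bar>"
    using gt unfolding g0_def s_def[symmetric] by (simp add: norm_scaleR)
  also have "\<dots> = \<bar>q(s/N)\<bar> * real dd * (s^(dd-1) / s)" using spos by (simp add: abs_mult)
  also have "\<dots> \<le> Bq q 0 * real dd * (2*N)^(dd-1)"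
  proof (intro mult_mono B0)
    have "s^(dd-1) / s \<le> s^(dd-1)" using s1 N spos by (simp add: divide_le_eq)
    also have "\<dots> \<le> (2*N)^(dd-1)" using s2 spos by (intro power_mono) auto
    finally show "s^(dd-1) / s \<le> (2*N)^(dd-1)" .
  qed (use B0 spos in auto)
  finally show ?thesis using True by simp
qed



lemma claim1:
  fixes F :: "'a::euclidean_space \<Rightarrow> complex"
  assumes q: "schwartz q" and supp: "\<forall>t. t \<notin> {1/2..2} \<longrightarrow> q t = 0"
    and Fi: "integrable lborel F" and N: "N \<ge> 2"
  shows "H1 q b F N t * cis (- 2 * pi * t * nu) =
    (\<integral>p. (indicator (cball 0 1) (fst p) * indicator (cball 0 1 - {0}) (snd p)) *\<^sub>R
       (F (fst p) * g0 q DIM('a) b N nu (fst p \<bullet> sgn (snd p)) t) \<partial>(lborel \<Otimes>\<^sub>M (lborel::'a measure)))"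
proof (cases "-b < t")
  case False
  then show ?thesis by (simp add: H1_def g0_def)
next
  case True
  define d where "d = DIM('a)"
  define B where "B = cball (0::'a) 1"
  define B' where "B' = cball (0::'a) 1 - {0}"
  define s where "s = sqrt (t + b)"
  define A where "A = 1/s * q(s/N)"
  define cst where "cst = complex_of_real A * cis (- 2 * pi * t * nu)"
  define Gk where "Gk = (\<lambda>p. (indicator B (fst p) * indicator B' (snd p)) *\<^sub>R
       (F (fst p) * g0 q d b N nu (fst p \<bullet> sgn (snd p)) t))"
  have spos: "s > 0" unfolding s_def using True by simp
  have d1: "d \<ge> 1" unfolding d_def by (simp add: DIM_positive Suc_leI)
  have Fm [measurable]: "F \<in> borel_measurable borel" using borel_measurable_integrable[OF Fi] by simp
  have [measurable]: "B \<in> sets borel" "B' \<in> sets borel" unfolding B_def B'_def by auto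
  have g0eq: "g0 q d b N nu phi t = (A * (real d * s^(d-1))) *\<^sub>R cis (- 2 * pi * (s * phi)) * cis (- 2 * pi * t * nu)" for phi
  proof -
    have "cis (-2*pi * sqrt(t+b)*phi - 2*pi*t*nu) = cis (- 2 * pi * (s * phi)) * cis (- 2 * pi * t * nu)"
      unfolding cis_mult by (rule arg_cong[where f=cis]) (simp add: s_def algebra_simps)
    then show ?thesis using True unfolding g0_def A_def s_def[symmetric] by (simp add: mult.assoc)
  qed
  define Mq where "Mq = Bq q 0 * real d * (2*N)^(d-1)"
  have gb: "norm (g0 q d b N nu phi t) \<le> Mq" for phi
  proof -
    have "norm (g0 q d b N nu phi t) \<le> indicator {N^2/4 - b .. 4*N^2 - b} t * Mq"
      unfolding Mq_def by (rule g0_bound[OF q supp d1 N])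
    also have "\<dots> \<le> Mq"
    proof -
      have "0 \<le> Bq q 0" using Bq[OF q, of 0 0] by linarith
      then have "0 \<le> Mq" unfolding Mq_def using N by simp
      then show ?thesis by (simp add: indicator_def)
    qed
    finally show ?thesis .
  qed
  have intG: "integrable (lborel \<Otimes>\<^sub>M lborel) Gk"
  proof (rule Bochner_Integration.integrable_bound)
    show "integrable (lborel \<Otimes>\<^sub>M lborel) (\<lambda>p. (indicator B (fst p) * norm (F (fst p)) * Mq) * indicator B' (snd p))"
    proof -
      have i1: "integrable lborel (\<lambda>x. indicator B x * norm (F x) * Mq)"
      proof -
        have "integrable lborel (\<lambda>x. indicator B x *\<^sub>R norm (F x))"
          using Fi by (intro integrable_mult_indicator) auto
        then show ?thesis by (intro integrable_mult_left) simp
      qed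
      have i2: "integrable lborel (indicator B' :: 'a \<Rightarrow> real)"
      proof -
        have "emeasure lborel B' < \<infinity>" unfolding B'_def
          by (intro emeasure_bounded_finite) (auto intro: bounded_subset[OF bounded_cball])
        then show ?thesis by (intro integrable_indicator_iff[THEN iffD2]) (auto simp: B'_def)
      qed
      show ?thesis using lborel_pair.integrable_prod_mult[OF i1 i2] by simp
    qed
    have gm: "(\<lambda>p. g0 q d b N nu (fst p \<bullet> sgn (snd p)) t) \<in> borel_measurable (lborel \<Otimes>\<^sub>M (lborel::'a measure))"
      by (rule g0_meas[OF q]) measurable
    show "Gk \<in> borel_measurable (lborel \<Otimes>\<^sub>M lborel)"
      unfolding Gk_def using gm by measurable
    show "AE p in lborel \<Otimes>\<^sub>M lborel. norm (Gk p) \<le> norm ((indicator B (fst p) * norm (F (fst p)) * Mq) * indicator B' (snd p))"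
    proof (intro AE_I2)
      fix p :: "'a \<times> 'a"
      have "norm (F (fst p)) * norm (g0 q d b N nu (fst p \<bullet> sgn (snd p)) t) \<le> norm (F (fst p)) * Mq"
        by (rule mult_left_mono[OF gb]) simp
      then show "norm (Gk p) \<le> norm ((indicator B (fst p) * norm (F (fst p)) * Mq) * indicator B' (snd p))"
        unfolding Gk_def by (auto simp: norm_mult indicator_def)
    qed
  qed
  have inner: "(\<integral>\<eta>. Gk (x, \<eta>) \<partial>lborel) = cst * (indicator B x *\<^sub>R (F x * sphere_ft s x))" for x
  proof -
    have "(\<integral>\<eta>. Gk (x, \<eta>) \<partial>lborel) = (\<integral>\<eta>. (cst * (indicator B x *\<^sub>R F x)) * ((real d * s^(d-1)) *\<^sub>R
        (indicator B' \<eta> *\<^sub>R cis (-2*pi*(s * (x \<bullet> sgn \<eta>))))) \<partial>lborel)"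
      unfolding Gk_def g0eq cst_def
      by (rule Bochner_Integration.integral_cong) (auto simp: scaleR_conv_of_real mult_ac)
    also have "\<dots> = (cst * (indicator B x *\<^sub>R F x)) * ((real d * s^(d-1)) *\<^sub>R
        (\<integral>\<eta>. indicator B' \<eta> *\<^sub>R cis (-2*pi*(s * (x \<bullet> sgn \<eta>))) \<partial>lborel))"
      by (simp only: integral_mult_right_zero integral_scaleR_right)
    also have "\<dots> = cst * (indicator B x *\<^sub>R (F x * sphere_ft s x))"
      unfolding sphere_ft_eq[OF less_imp_le[OF spos], of x] d_def B'_def
      by (simp add: mult_ac)
    finally show ?thesis .
  qed
  have "(\<integral>p. Gk p \<partial>(lborel \<Otimes>\<^sub>M lborel)) = (\<integral>x. (\<integral>\<eta>. Gk (x, \<eta>) \<partial>lborel) \<partial>lborel)"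
    by (rule lborel_pair.integral_fst'[OF intG, symmetric])
  also have "\<dots> = (\<integral>x. cst * (indicator B x *\<^sub>R (F x * sphere_ft s x)) \<partial>lborel)"
    by (simp only: inner)
  also have "\<dots> = cst * h1 F s"
    unfolding h1_def B_def by (rule integral_mult_right_zero)
  also have "\<dots> = H1 q b F N t * cis (- 2 * pi * t * nu)"
    using True unfolding H1_def cst_def A_def s_def by (simp add: mult_ac)
  finally show ?thesis unfolding Gk_def d_def B_def B'_def by simp
qed



lemma ft1_bound:
  fixes f :: "'a::euclidean_space \<Rightarrow> complex"
  assumes q: "schwartz q" and supp: "\<forall>t. t \<notin> {1/2..2} \<longrightarrow> q t = 0"
    and fi: "integrable lborel f" and N: "N \<ge> 2" and nu: "\<bar>nu\<bar> \<ge> 1"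
  shows "norm (ft1 (H1 q b (conv f (tilde f)) N) nu) \<le>
    (2*real DIM('a)*N^DIM('a) * (4 * bnd q ((stp^^DIM('a)) [(1,0,0,DIM('a)-1)]) / \<bar>N^2*nu\<bar>^DIM('a)))
      * measure lborel (cball (0::'a) 1 - {0}) * L1norm (conv f (tilde f))"
proof -
  define F where "F = conv f (tilde f)"
  define d where "d = DIM('a)"
  define B where "B = cball (0::'a) 1"
  define B' where "B' = cball (0::'a) 1 - {0}"
  define S where "S = {N^2/4 - b .. 4*N^2 - b}"
  define Mq where "Mq = Bq q 0 * real d * (2*N)^(d-1)"
  define Mnu where "Mnu = 2*real d*N^d * (4 * bnd q ((stp^^d) [(1,0,0,d-1)]) / \<bar>N^2*nu\<bar>^d)"
  define Gk where "Gk = (\<lambda>t p. (indicator B (fst p) * indicator B' (snd p)) *\<^sub>R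
       (F (fst p) * g0 q d b N nu (fst p \<bullet> sgn (snd p)) t))"
  define P where "P = (lborel \<Otimes>\<^sub>M lborel :: ('a \<times> 'a) measure)"
  have Fi: "integrable lborel F" unfolding F_def by (rule conv_int[OF fi])
  have d1: "d \<ge> 1" unfolding d_def by (simp add: DIM_positive Suc_leI)
  have Fm [measurable]: "F \<in> borel_measurable borel" using borel_measurable_integrable[OF Fi] by simp
  have [measurable]: "B \<in> sets borel" "B' \<in> sets borel" unfolding B_def B'_def by auto
  have sfP: "sigma_finite_measure P" unfolding P_def
    by (intro sigma_finite_pair_measure lborel.sigma_finite_measure_axioms)
  interpret T: pair_sigma_finite "lborel :: real measure" P
    by (intro pair_sigma_finite.intro lborel.sigma_finite_measure_axioms sfP)
  have Bq0: "0 \<le> Bq q 0" using Bq[OF q, of 0 0] by linarith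
  have Mq0: "0 \<le> Mq" unfolding Mq_def using Bq0 N by simp
  have iB': "integrable lborel (indicator B' :: 'a \<Rightarrow> real)"
  proof -
    have "emeasure lborel B' < \<infinity>" unfolding B'_def
      by (intro emeasure_bounded_finite) (auto intro: bounded_subset[OF bounded_cball])
    then show ?thesis by (intro integrable_indicator_iff[THEN iffD2]) (auto simp: B'_def)
  qed
  have iBF: "integrable lborel (\<lambda>x. indicator B x * norm (F x))"
  proof -
    have "integrable lborel (\<lambda>x. indicator B x *\<^sub>R norm (F x))"
      using Fi by (intro integrable_mult_indicator) auto
    then show ?thesis by simp
  qed
  have iP: "integrable P (\<lambda>p. indicator B (fst p) * norm (F (fst p)) * indicator B' (snd p))"
    unfolding P_def using lborel_pair.integrable_prod_mult[OF iBF iB'] by simp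
  have iS: "integrable lborel (\<lambda>t. indicator S t * Mq :: real)"
  proof -
    have "integrable lborel (indicator S :: real \<Rightarrow> real)"
      unfolding S_def by (intro integrable_indicator_iff[THEN iffD2]) auto
    then show ?thesis by (intro integrable_mult_left)
  qed
  have intT: "integrable (lborel \<Otimes>\<^sub>M P) (\<lambda>z. Gk (fst z) (snd z))"
  proof (rule Bochner_Integration.integrable_bound)
    show "integrable (lborel \<Otimes>\<^sub>M P) (\<lambda>z. (indicator S (fst z) * Mq) *
        (indicator B (fst (snd z)) * norm (F (fst (snd z))) * indicator B' (snd (snd z))))"
      using T.integrable_prod_mult[OF iS iP] by simp
    have gm: "(\<lambda>z. g0 q d b N nu (fst (snd z) \<bullet> sgn (snd (snd z))) (fst z)) \<in> borel_measurable (lborel \<Otimes>\<^sub>M P)"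
      by (rule g0_meas[OF q]) (unfold P_def, measurable)
    show "(\<lambda>z. Gk (fst z) (snd z)) \<in> borel_measurable (lborel \<Otimes>\<^sub>M P)"
      unfolding Gk_def using gm unfolding P_def by measurable
    show "AE z in lborel \<Otimes>\<^sub>M P. norm (Gk (fst z) (snd z)) \<le> norm ((indicator S (fst z) * Mq) *
        (indicator B (fst (snd z)) * norm (F (fst (snd z))) * indicator B' (snd (snd z))))"
    proof (intro AE_I2)
      fix z :: "real \<times> 'a \<times> 'a"
      have g: "norm (g0 q d b N nu (fst (snd z) \<bullet> sgn (snd (snd z))) (fst z)) \<le> indicator S (fst z) * Mq"
        unfolding S_def Mq_def by (rule g0_bound[OF q supp d1 N])
      have "norm (F (fst (snd z))) * norm (g0 q d b N nu (fst (snd z) \<bullet> sgn (snd (snd z))) (fst z))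
          \<le> norm (F (fst (snd z))) * (indicator S (fst z) * Mq)"
        by (rule mult_left_mono[OF g]) simp
      then show "norm (Gk (fst z) (snd z)) \<le> norm ((indicator S (fst z) * Mq) *
        (indicator B (fst (snd z)) * norm (F (fst (snd z))) * indicator B' (snd (snd z))))"
        unfolding Gk_def using Mq0 by (auto simp: norm_mult indicator_def mult_ac)
    qed
  qed
  have e1: "ft1 (H1 q b F N) nu = (\<integral>t. (\<integral>p. Gk t p \<partial>P) \<partial>lborel)"
    unfolding ft1_def Gk_def P_def d_def B_def B'_def
    by (rule Bochner_Integration.integral_cong[OF refl]) (rule claim1[OF q supp Fi N])
  also have "\<dots> = (\<integral>p. (\<integral>t. Gk t p \<partial>lborel) \<partial>P)"
    using T.Fubini_integral[of Gk] intT by (simp add: case_prod_beta')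
  finally have e1: "ft1 (H1 q b F N) nu = (\<integral>p. (\<integral>t. Gk t p \<partial>lborel) \<partial>P)" .
  have pw: "norm (\<integral>t. Gk t p \<partial>lborel) \<le> Mnu * (indicator B (fst p) * norm (F (fst p)) * indicator B' (snd p))" for p
  proof -
    have "(\<integral>t. Gk t p \<partial>lborel) = (indicator B (fst p) * indicator B' (snd p)) *\<^sub>R
       (F (fst p) * (\<integral>t. g0 q d b N nu (fst p \<bullet> sgn (snd p)) t \<partial>lborel))"
      unfolding Gk_def by (simp only: integral_scaleR_right integral_mult_right_zero)
    moreover have "norm (\<integral>t. g0 q d b N nu (fst p \<bullet> sgn (snd p)) t \<partial>lborel) \<le> Mnu"
      if "fst p \<in> B" "snd p \<in> B'"
    proof -
      have "\<bar>fst p \<bullet> sgn (snd p)\<bar> \<le> norm (fst p) * norm (sgn (snd p))" by (rule Cauchy_Schwarz_ineq2)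
      also have "\<dots> \<le> 1 * 1" using that unfolding B_def B'_def
        by (intro mult_mono) (auto simp: norm_sgn)
      finally have "\<bar>fst p \<bullet> sgn (snd p)\<bar> \<le> 1" by simp
      from t_int[OF q supp d1 N nu this, of b d] show ?thesis unfolding Mnu_def .
    qed
    ultimately show ?thesis
      by (auto simp: indicator_def norm_mult intro: mult_left_mono[where c = "norm (F (fst p))", THEN order_trans] simp: mult.commute)
  qed
  have "norm (ft1 (H1 q b F N) nu) \<le> (\<integral>p. norm (\<integral>t. Gk t p \<partial>lborel) \<partial>P)"
    unfolding e1 by (rule integral_norm_bound)
  also have "\<dots> \<le> (\<integral>p. Mnu * (indicator B (fst p) * norm (F (fst p)) * indicator B' (snd p)) \<partial>P)"
  proof (rule integral_mono)
    show "integrable P (\<lambda>p. norm (\<integral>t. Gk t p \<partial>lborel))"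
      using T.integrable_snd[of Gk] intT by (simp add: case_prod_beta')
    show "integrable P (\<lambda>p. Mnu * (indicator B (fst p) * norm (F (fst p)) * indicator B' (snd p)))"
      using iP by (rule integrable_mult_right)
  qed (rule pw)
  also have "\<dots> = Mnu * measure lborel B' * (\<integral>x. indicator B x * norm (F x) \<partial>lborel)"
  proof -
    have "(\<integral>p. Mnu * (indicator B (fst p) * norm (F (fst p)) * indicator B' (snd p)) \<partial>P)
      = (\<integral>x. (\<integral>y. Mnu * (indicator B x * norm (F x) * indicator B' y) \<partial>lborel) \<partial>lborel)"
      unfolding P_def using integrable_mult_right[OF iP[unfolded P_def], of Mnu]
      by (subst lborel_pair.integral_fst'[symmetric]) auto
    also have "\<dots> = (\<integral>x. (Mnu * measure lborel B') * (indicator B x * norm (F x)) \<partial>lborel)"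
    proof (rule Bochner_Integration.integral_cong[OF refl])
      fix x
      have "(\<integral>y. Mnu * (indicator B x * norm (F x) * indicator B' y) \<partial>lborel)
          = Mnu * (indicator B x * norm (F x)) * (\<integral>y. indicator B' y \<partial>lborel)"
        by (simp add: mult.assoc)
      also have "(\<integral>y. indicator B' y \<partial>lborel) = measure lborel B'"
        using iB' by (simp add: integrable_indicator_iff)
      finally show "(\<integral>y. Mnu * (indicator B x * norm (F x) * indicator B' y) \<partial>lborel)
          = (Mnu * measure lborel B') * (indicator B x * norm (F x))" by simp
    qed
    also have "\<dots> = Mnu * measure lborel B' * (\<integral>x. indicator B x * norm (F x) \<partial>lborel)"
      by simp
    finally show ?thesis .
  qed
  also have "\<dots> \<le> Mnu * measure lborel B' * L1norm F"
  proof (rule mult_left_mono)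
    show "(\<integral>x. indicator B x * norm (F x) \<partial>lborel) \<le> L1norm F"
      unfolding L1norm_def using iBF Fi by (intro integral_mono) (auto simp: indicator_def)
    have "0 \<le> bnd q ((stp^^d) [(1,0,0,d-1)])" using ev_bound[OF q supp, of 1 "(stp^^d) [(1,0,0,d-1)]" 0] by linarith
    then show "0 \<le> Mnu * measure lborel B'" unfolding Mnu_def using N by simp
  qed
  finally show ?thesis unfolding Mnu_def d_def B'_def F_def .
qed



lemma inv_sq_int: "((\<lambda>\<nu>::int. 1 / (real_of_int \<nu>)^2) has_sum (pi^2/3)) (UNIV - {0})"
proof -
  let ?g = "\<lambda>\<nu>::int. 1 / (real_of_int \<nu>)^2"
  define h1 where "h1 = (\<lambda>n::nat. int n + 1)"
  define h2 where "h2 = (\<lambda>n::nat. - (int n + 1))"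
  have base: "((\<lambda>n::nat. 1 / (real n + 1)^2) has_sum (pi^2/6)) UNIV"
    using sums_nonneg_imp_has_sum[OF inverse_squares_sums] by (simp add: add.commute)
  have s1: "(?g has_sum (pi^2/6)) (range h1)"
    using base by (subst has_sum_reindex) (auto simp: inj_on_def h1_def o_def)
  have s2: "(?g has_sum (pi^2/6)) (range h2)"
  proof -
    have e: "(\<lambda>x::nat. 1/(- real x - 1)^2) = (\<lambda>n. 1/(real n+1)^2)"
      by (auto simp: power2_eq_square algebra_simps)
    show ?thesis using base e by (subst has_sum_reindex) (auto simp: inj_on_def h2_def o_def)
  qed
  have un: "UNIV - {0} = range h1 \<union> range h2"
  proof (intro set_eqI iffI)
    fix x :: int assume "x \<in> UNIV - {0}"
    then have "x > 0 \<or> x < 0" by auto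
    then show "x \<in> range h1 \<union> range h2"
    proof
      assume "x > 0" then have "x = h1 (nat (x - 1))" unfolding h1_def by simp
      then show ?thesis by blast
    next
      assume "x < 0" then have "x = h2 (nat (- x - 1))" unfolding h2_def by simp
      then show ?thesis by blast
    qed
  qed (auto simp: h1_def h2_def)
  have "(?g has_sum (pi^2/6 + pi^2/6)) (range h1 \<union> range h2)"
    by (rule has_sum_Un_disjoint[OF s1 s2]) (auto simp: h1_def h2_def)
  then show ?thesis unfolding un by simp
qed

theorem lemma1:
  fixes q :: "real \<Rightarrow> real"
  assumes "DIM('a::euclidean_space) \<ge> 2"
    and "schwartz q"
    and "\<forall>t. t \<notin> {1/2..2} \<longrightarrow> q t = 0"
  shows "\<exists>C N0. C > 0 \<and>
           (\<forall>b f N. b \<in> {0..<1} \<longrightarrow> integrable lborel (f :: 'a \<Rightarrow> complex) \<longrightarrow> N \<ge> N0 \<longrightarrow>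
              (let F = conv f (tilde f); H = H1 q b F N in
                 (\<lambda>\<nu>::int. norm (ft1 H (of_int \<nu>))) summable_on (UNIV - {0}) \<and>
                 (\<Sum>\<^sub>\<infinity>\<nu>\<in>UNIV - {0}. norm (ft1 H (of_int \<nu>))) \<le> C * L1norm F / N))"
proof -
  note d2 = assms(1) and q = assms(2) and supp = assms(3)
  define d where "d = DIM('a)"
  define K0 where "K0 = 8 * real d * bnd q ((stp^^d) [(1,0,0,d-1)]) * measure lborel (cball (0::'a) 1 - {0})"
  have K0: "0 \<le> K0"
  proof -
    have "0 \<le> bnd q ((stp^^d) [(1,0,0,d-1)])" using ev_bound[OF q supp, of 1 "(stp^^d) [(1,0,0,d-1)]" 0] by linarith
    then show ?thesis unfolding K0_def by simp
  qed
  define C where "C = 4 * K0 + 1"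
  have C: "C > 0" unfolding C_def using K0 by simp
  show ?thesis
  proof (rule exI[of _ C], rule exI[of _ "2::real"], intro conjI allI impI C, unfold Let_def)
    fix b N :: real and f :: "'a \<Rightarrow> complex"
    assume b: "b \<in> {0..<1}" and fi: "integrable lborel f" and N: "2 \<le> N"
    define F where "F = conv f (tilde f)"
    define H where "H = H1 q b F N"
    have L0: "0 \<le> L1norm F" unfolding L1norm_def by simp
    define w where "w = (\<lambda>\<nu>::int. (K0 * L1norm F / N) * (1 / (real_of_int \<nu>)^2))"
    have wb: "norm (ft1 H (of_int \<nu>)) \<le> w \<nu>" if "\<nu> \<in> UNIV - {0}" for \<nu>
    proof -
      have nu: "\<bar>real_of_int \<nu>\<bar> \<ge> 1" using that by auto
      have "norm (ft1 H (of_int \<nu>)) \<le> (2*real d*N^d * (4 * bnd q ((stp^^d) [(1,0,0,d-1)]) / \<bar>N^2 * of_int \<nu>\<bar>^d))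
          * measure lborel (cball (0::'a) 1 - {0}) * L1norm F"
        using ft1_bound[OF q supp fi N nu, of b] unfolding H_def F_def d_def .
      also have "\<dots> = K0 * L1norm F / (N^d * \<bar>of_int \<nu>\<bar>^d)"
        unfolding K0_def using N by (simp add: power_mult_distrib abs_mult field_simps power2_eq_square power_mult[symmetric])
      also have "\<dots> \<le> K0 * L1norm F / (N * (real_of_int \<nu>)^2)"
      proof (rule divide_left_mono)
        have "N \<le> N^d" using N d2 unfolding d_def by (intro self_le_power) auto
        moreover have "(real_of_int \<nu>)^2 \<le> \<bar>of_int \<nu>\<bar>^d"
          using nu d2 unfolding d_def by (metis power2_abs power_increasing)
        ultimately show "N * (real_of_int \<nu>)^2 \<le> N^d * \<bar>of_int \<nu>\<bar>^d"
          using N by (intro mult_mono) auto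
        show "0 \<le> K0 * L1norm F" using K0 L0 by simp
        show "0 < N^d * \<bar>of_int \<nu>\<bar>^d * (N * (real_of_int \<nu>)^2)" using N that by simp
      qed
      also have "\<dots> = w \<nu>" unfolding w_def by simp
      finally show ?thesis .
    qed
    have ws: "(w has_sum ((K0 * L1norm F / N) * (pi^2/3))) (UNIV - {0})"
      unfolding w_def by (rule has_sum_cmult_right[OF inv_sq_int])
    have sm: "(\<lambda>\<nu>::int. norm (ft1 H (of_int \<nu>))) summable_on (UNIV - {0})"
      by (rule summable_on_comparison_test[OF has_sum_imp_summable[OF ws] wb]) simp_all
    have "(\<Sum>\<^sub>\<infinity>\<nu>\<in>UNIV - {0}. norm (ft1 H (of_int \<nu>))) \<le> infsum w (UNIV - {0})"
      by (rule infsum_mono[OF sm has_sum_imp_summable[OF ws] wb])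
    also have "\<dots> = (K0 * L1norm F / N) * (pi^2/3)" using ws by (rule infsumI)
    also have "\<dots> \<le> (K0 * L1norm F / N) * 4"
    proof (rule mult_left_mono)
      have "pi^2 \<le> (16/5)^2" using pi_less_4 pi_gt3 
        by (intro power_mono) (use pi_approx in auto)
      moreover have "(16/5::real)^2 \<le> 12" by (simp add: power2_eq_square)
      ultimately show "pi^2/3 \<le> 4" by linarith
      show "0 \<le> K0 * L1norm F / N" using K0 L0 N by simp
    qed
    also have "\<dots> \<le> C * L1norm F / N"
      unfolding C_def using L0 N K0 by (simp add: field_simps)
    finally have "(\<Sum>\<^sub>\<infinity>\<nu>\<in>UNIV - {0}. norm (ft1 H (of_int \<nu>))) \<le> C * L1norm F / N" .
    then show "(\<lambda>\<nu>::int. norm (ft1 (H1 q b (conv f (tilde f)) N) (of_int \<nu>))) summable_on (UNIV - {0}) \<and>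
                 (\<Sum>\<^sub>\<infinity>\<nu>\<in>UNIV - {0}. norm (ft1 (H1 q b (conv f (tilde f)) N) (of_int \<nu>))) \<le> C * L1norm (conv f (tilde f)) / N"
      using sm unfolding H_def F_def by simp
  qed
qed

end
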